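(* Let $\Phi\subset\mathbb{R}^m$ be compact, let $Q\in\mathbb{R}^{n\times n}$ be symmetric positive definite, and let $g:\mathbb{R}^n\to\mathbb{R}^s$, $h:\mathbb{R}^n\to\mathbb{R}^q$ be continuous functions defining convex constraints, so that the feasible set $\mathcal{C}=\{x\in\mathbb{R}^n: g(x)\le 0,\ h(x)=0\}$ is convex. For $v\in\mathbb{R}^n$ let $\Pi^Q_{\mathcal{C}}(v)=\operatorname{argmin}_{w\in\mathcal{C}}\|w-v\|_Q^2$, where $\|x\|_Q=\sqrt{x^\top Qx}$. Let $\{f_\theta:\Phi\to\mathbb{R}^n\}_\theta$ be a family of neural networks that is a universal approximator, i.e. for every continuous $u:\Phi\to\mathbb{R}^n$ and every $\epsilon>0$ there is $\theta$ with $\sup_{\phi\in\Phi}\|u(\phi)-f_\theta(\phi)\|<\epsilon$. Then for every continuous target function $u:\Phi\to\mathcal{C}$ and every $\epsilon>0$ there exist network parameters $\theta$ such that $$\sup_{\phi\in\Phi}\big\|u(\phi)-\Pi^Q_{\mathcal{C}}(f_\theta(\phi))\big\|<\epsilon.$$ That is, the composition $\hat f_\theta=\Pi^Q_{\mathcal{C}}\circ f_\theta:\Phi\to\mathcal{C}$ is a universal approximator for continuous constraint-satisfying mappings.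
   Context: In the paper's framework, $f_\theta(\phi)$ is the predicted mean $\mu_\theta(\phi)$ of a probabilistic model and $\Pi^Q_{\mathcal{C}}(f_\theta(\phi))$ is the projected (constrained) mean. *)

theory Defs
  imports "HOL-Analysis.Analysis"
begin

definition qnorm :: "real^'n^'n \<Rightarrow> real^'n \<Rightarrow> real" where
  "qnorm Q x = sqrt (x \<bullet> (Q *v x))"

definition feasible :: "(real^'n \<Rightarrow> real^'s) \<Rightarrow> (real^'n \<Rightarrow> real^'q) \<Rightarrow> (real^'n) set" where
  "feasible g h = {x. (\<forall>i. g x $ i \<le> 0) \<and> h x = 0}"

definition projQ :: "real^'n^'n \<Rightarrow> (real^'n) set \<Rightarrow> real^'n \<Rightarrow> real^'n" where
  "projQ Q C v = (SOME w. w \<in> C \<and> (\<forall>w'\<in>C. (qnorm Q (w - v))\<^sup>2 \<le> (qnorm Q (w' - v))\<^sup>2))"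

definition sup_dist :: "'a set \<Rightarrow> ('a \<Rightarrow> 'b::real_normed_vector) \<Rightarrow> ('a \<Rightarrow> 'b) \<Rightarrow> ereal" where
  "sup_dist A F G = (SUP x\<in>A. ereal (norm (F x - G x)))"

end

theory Submission
  imports Defs
begin

lemma Bsym:
  fixes Q :: "real^'n^'n"
  assumes "transpose Q = Q"
  shows "x \<bullet> (Q *v y) = y \<bullet> (Q *v x)"
proof -
  have "x \<bullet> (Q *v y) = (x v* Q) \<bullet> y" by (simp add: dot_lmul_matrix)
  also have "\<dots> = (transpose Q *v x) \<bullet> y" by simp
  also have "\<dots> = y \<bullet> (Q *v x)" using assms by (simp add: inner_commute)
  finally show ?thesis .
qed

lemma Blower:
  fixes Q :: "real^'n^'n"
  assumes "\<forall>x. x \<noteq> 0 \<longrightarrow> x \<bullet> (Q *v x) > 0"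
  shows "\<exists>a>0. \<forall>x. a * (norm x)^2 \<le> x \<bullet> (Q *v x)"
proof -
  have cont: "continuous_on (sphere 0 1) (\<lambda>x::real^'n. x \<bullet> (Q *v x))"
    by (intro continuous_intros linear_continuous_on bounded_linear.linear) simp
  have ne: "sphere (0::real^'n) 1 \<noteq> {}" by simp
  obtain x0 where x0: "x0 \<in> sphere 0 1" and m: "\<And>y. y \<in> sphere 0 1 \<Longrightarrow> x0 \<bullet> (Q *v x0) \<le> y \<bullet> (Q *v y)"
    using continuous_attains_inf[OF compact_sphere ne cont] by blast
  define a where "a = x0 \<bullet> (Q *v x0)"
  have "x0 \<noteq> 0" using x0 by auto
  then have apos: "a > 0" using assms unfolding a_def by auto
  have "a * (norm x)^2 \<le> x \<bullet> (Q *v x)" for x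
  proof (cases "x = 0")
    case True then show ?thesis by simp
  next
    case False
    define y where "y = (1 / norm x) *\<^sub>R x"
    have "y \<in> sphere 0 1" using False unfolding y_def by simp
    then have "a \<le> y \<bullet> (Q *v y)" using m unfolding a_def by blast
    also have "y \<bullet> (Q *v y) = (1/norm x)^2 * (x \<bullet> (Q *v x))"
      unfolding y_def by (simp add: matrix_vector_mult_scaleR power2_eq_square)
    finally have "a \<le> (1/norm x)^2 * (x \<bullet> (Q *v x))" .
    then have "a * (norm x)^2 \<le> (1/norm x)^2 * (x \<bullet> (Q *v x)) * (norm x)^2"
      by (simp add: mult_right_mono)
    also have "\<dots> = x \<bullet> (Q *v x)" using False by (simp add: field_simps)
    finally show ?thesis .
  qed
  then show ?thesis using apos by blast
qed

lemma varineq: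
  fixes Q :: "real^'n^'n"
  assumes sym: "transpose Q = Q" and psd: "\<forall>x. x \<bullet> (Q *v x) \<ge> 0"
    and C: "convex C" and p: "p \<in> C" and c: "c \<in> C"
    and min: "\<forall>w\<in>C. (p - v) \<bullet> (Q *v (p - v)) \<le> (w - v) \<bullet> (Q *v (w - v))"
  shows "(p - v) \<bullet> (Q *v (c - p)) \<ge> 0"
proof (rule ccontr)
  define d where "d = (p - v) \<bullet> (Q *v (c - p))"
  define e where "e = (c - p) \<bullet> (Q *v (c - p))"
  assume "\<not> ?thesis"
  then have dneg: "d < 0" unfolding d_def by simp
  have e0: "e \<ge> 0" using psd unfolding e_def by blast
  define t where "t = min 1 (- d / (e + 1))"
  have t0: "t > 0" "t \<le> 1" using dneg e0 unfolding t_def by (auto simp: divide_neg_pos)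
  have te: "t * e \<le> - d"
  proof -
    have "t * e \<le> (- d / (e + 1)) * e" using e0 unfolding t_def by (intro mult_right_mono) auto
    also have "\<dots> \<le> - d" using e0 dneg by (simp add: field_simps)
    finally show ?thesis .
  qed
  have "p + t *\<^sub>R (c - p) \<in> C"
  proof -
    have "(1 - t) *\<^sub>R p + t *\<^sub>R c \<in> C" using C p c t0 by (intro convexD) auto
    moreover have "(1 - t) *\<^sub>R p + t *\<^sub>R c = p + t *\<^sub>R (c - p)" by (simp add: algebra_simps)
    ultimately show ?thesis by simp
  qed
  then have le: "(p - v) \<bullet> (Q *v (p - v)) \<le> (p + t *\<^sub>R (c - p) - v) \<bullet> (Q *v (p + t *\<^sub>R (c - p) - v))"
    using min by blast
  have "(p + t *\<^sub>R (c - p) - v) \<bullet> (Q *v (p + t *\<^sub>R (c - p) - v))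
     = (p - v) \<bullet> (Q *v (p - v)) + t * ((p - v) \<bullet> (Q *v (c - p))) + t * ((c - p) \<bullet> (Q *v (p - v)))
       + t * t * e"
    unfolding e_def
    by (simp add: matrix_vector_right_distrib matrix_vector_mult_scaleR inner_add_left inner_add_right algebra_simps)
  also have "(c - p) \<bullet> (Q *v (p - v)) = d" unfolding d_def using Bsym[OF sym] by metis
  finally have "0 \<le> t * d + t * d + t * t * e" using le unfolding d_def by linarith
  then have "0 \<le> t * (2 * d + t * e)" by (simp add: algebra_simps)
  then have "0 \<le> 2 * d + t * e" using t0 by (simp add: zero_le_mult_iff)
  then show False using te dneg by linarith
qed

lemma lipproj:
  fixes Q :: "real^'n^'n"
  assumes sym: "transpose Q = Q" and psd: "\<forall>x. x \<bullet> (Q *v x) \<ge> 0"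
    and a: "a > 0" "\<forall>x. a * (norm x)^2 \<le> x \<bullet> (Q *v x)"
    and K: "K > 0" "\<forall>x. norm (Q *v x) \<le> norm x * K"
    and C: "convex C" and p1: "p1 \<in> C" and p2: "p2 \<in> C"
    and min1: "\<forall>w\<in>C. (p1 - v1) \<bullet> (Q *v (p1 - v1)) \<le> (w - v1) \<bullet> (Q *v (w - v1))"
    and min2: "\<forall>w\<in>C. (p2 - v2) \<bullet> (Q *v (p2 - v2)) \<le> (w - v2) \<bullet> (Q *v (w - v2))"
  shows "norm (p1 - p2) \<le> (K / a) * norm (v1 - v2)"
proof -
  define d where "d = p1 - p2"
  define w where "w = v1 - v2"
  have i1: "(p1 - v1) \<bullet> (Q *v (p2 - p1)) \<ge> 0" by (rule varineq[OF sym psd C p1 p2 min1])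
  have i2: "(p2 - v2) \<bullet> (Q *v (p1 - p2)) \<ge> 0" by (rule varineq[OF sym psd C p2 p1 min2])
  have "p2 - p1 = - d" unfolding d_def by simp
  then have i1': "(p1 - v1) \<bullet> (Q *v d) \<le> 0" using i1
    by (simp add: matrix_vector_mult_scaleR[of Q "-1" d, simplified] inner_minus_right)
  have "d - w = (p1 - v1) - (p2 - v2)" unfolding d_def w_def by simp
  then have "(d - w) \<bullet> (Q *v d) = (p1 - v1) \<bullet> (Q *v d) - (p2 - v2) \<bullet> (Q *v d)"
    by (simp add: inner_diff_left)
  also have "\<dots> \<le> 0" using i1' i2 unfolding d_def by simp
  finally have "d \<bullet> (Q *v d) \<le> w \<bullet> (Q *v d)" by (simp add: inner_diff_left)
  also have "\<dots> \<le> norm w * norm (Q *v d)" by (rule norm_cauchy_schwarz)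
  also have "\<dots> \<le> norm w * (norm d * K)" using K by (simp add: mult_left_mono)
  finally have ineq: "a * (norm d)^2 \<le> norm w * (norm d * K)" using a(2) by (meson order_trans)
  show ?thesis
  proof (cases "d = 0")
    case True
    show ?thesis using True a K(1) unfolding d_def by simp
  next
    case False
    then have nd: "norm d > 0" by simp
    have "a * norm d * norm d \<le> (K * norm w) * norm d" using ineq by (simp add: power2_eq_square algebra_simps)
    then have "a * norm d \<le> K * norm w" using nd by simp
    then have "norm d \<le> K * norm w / a" using a by (simp add: field_simps)
    then show ?thesis unfolding d_def w_def by simp
  qed
qed

lemma exmin:
  fixes Q :: "real^'n^'n"
  assumes a: "a > 0" "\<forall>x. a * (norm x)^2 \<le> x \<bullet> (Q *v x)"
    and C: "closed C" "C \<noteq> {}"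
  shows "\<exists>p\<in>C. \<forall>w\<in>C. (p - v) \<bullet> (Q *v (p - v)) \<le> (w - v) \<bullet> (Q *v (w - v))"
proof -
  define F where "F = (\<lambda>w::real^'n. (w - v) \<bullet> (Q *v (w - v)))"
  have cQ: "continuous_on UNIV ((*v) Q)" by (simp add: linear_continuous_on)
  have cQ2: "continuous_on UNIV (\<lambda>w. Q *v (w - v))"
  proof -
    have "continuous_on UNIV (\<lambda>w::real^'n. w - v)" by (intro continuous_intros)
    then show ?thesis
      using continuous_on_compose[of UNIV "\<lambda>w. w - v" "(*v) Q", unfolded o_def,
          OF _ continuous_on_subset[OF cQ subset_UNIV]] by blast
  qed
  have contF: "continuous_on UNIV F" unfolding F_def
    by (intro continuous_intros cQ2)
  obtain w0 where w0: "w0 \<in> C" using C by blast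
  define S where "S = C \<inter> {w. F w \<le> F w0}"
  have "closed S" unfolding S_def
    using C(1) contF by (intro closed_Int closed_Collect_le) (auto intro: continuous_on_const)
  moreover have "bounded S"
  proof -
    have "S \<subseteq> cball v (sqrt (F w0 / a))"
    proof
      fix w assume "w \<in> S"
      then have "a * (norm (w - v))^2 \<le> F w0" using a(2) unfolding S_def F_def by (meson IntD2 mem_Collect_eq order_trans)
      then have "(norm (w - v))^2 \<le> F w0 / a" using a(1) by (simp add: field_simps)
      then have "norm (w - v) \<le> sqrt (F w0 / a)" by (simp add: real_le_rsqrt)
      then show "w \<in> cball v (sqrt (F w0 / a))" by (simp add: dist_norm norm_minus_commute)
    qed
    then show ?thesis using bounded_subset bounded_cball by blast
  qed
  ultimately have cS: "compact S" using compact_eq_bounded_closed by blast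
  have neS: "S \<noteq> {}" using w0 unfolding S_def by auto
  have cFS: "continuous_on S F" by (rule continuous_on_subset[OF contF subset_UNIV])
  obtain p where p: "p \<in> S" "\<And>y. y \<in> S \<Longrightarrow> F p \<le> F y"
    using continuous_attains_inf[OF cS neS cFS] by blast
  have "\<forall>w\<in>C. F p \<le> F w"
  proof
    fix w assume "w \<in> C"
    show "F p \<le> F w"
    proof (cases "F w \<le> F w0")
      case True then show ?thesis using p \<open>w \<in> C\<close> unfolding S_def by auto
    next
      case False then show ?thesis using p(1) unfolding S_def by auto
    qed
  qed
  then show ?thesis using p(1) unfolding S_def F_def by blast
qed


theorem theorem2:
  fixes \<Phi> :: "(real^'m) set"
    and Q :: "real^'n^'n"
    and g :: "real^'n \<Rightarrow> real^'s"
    and h :: "real^'n \<Rightarrow> real^'q"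
    and f :: "'theta \<Rightarrow> real^'m \<Rightarrow> real^'n"
  assumes "compact \<Phi>"
    and "transpose Q = Q"
    and "\<forall>x. x \<noteq> 0 \<longrightarrow> x \<bullet> (Q *v x) > 0"
    and "continuous_on UNIV g" and "continuous_on UNIV h"
    and "convex (feasible g h)"
    and "\<forall>u :: real^'m \<Rightarrow> real^'n. continuous_on \<Phi> u \<longrightarrow>
           (\<forall>\<epsilon>>0. \<exists>\<theta>. sup_dist \<Phi> u (f \<theta>) < ereal \<epsilon>)"
  shows "\<forall>u :: real^'m \<Rightarrow> real^'n. continuous_on \<Phi> u \<and> u ` \<Phi> \<subseteq> feasible g h \<longrightarrow>
           (\<forall>\<epsilon>>0. \<exists>\<theta>. sup_dist \<Phi> u (\<lambda>\<phi>. projQ Q (feasible g h) (f \<theta> \<phi>)) < ereal \<epsilon>)"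
proof (intro allI impI)
  fix u :: "real^'m \<Rightarrow> real^'n" and \<epsilon> :: real
  assume u: "continuous_on \<Phi> u \<and> u ` \<Phi> \<subseteq> feasible g h" and eps: "\<epsilon> > 0"
  define C where "C = feasible g h"
  have sym: "transpose Q = Q" using assms(2) .
  have psd: "\<forall>x. x \<bullet> (Q *v x) \<ge> 0"
  proof
    fix x :: "real^'n" show "x \<bullet> (Q *v x) \<ge> 0" using assms(3) by (cases "x = 0") (auto intro: less_imp_le)
  qed
  obtain a where a: "a > 0" "\<forall>x. a * (norm x)^2 \<le> x \<bullet> (Q *v x)" using Blower[OF assms(3)] by blast
  obtain K where K: "K > 0" "\<forall>x. norm (Q *v x) \<le> norm x * K"
    using bounded_linear.pos_bounded[OF matrix_vector_mul_bounded_linear[of Q]] by blast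
  have cvx: "convex C" using assms(6) unfolding C_def .
  have clC: "closed C"
  proof -
    have "C = (\<Inter>i. {x. g x $ i \<le> 0}) \<inter> {x. h x = 0}" unfolding C_def feasible_def by auto
    moreover have "closed {x. g x $ i \<le> 0}" for i
    proof -
      have "continuous_on UNIV (\<lambda>x. g x $ i)"
        using assms(4) by (intro continuous_intros) auto
      then show ?thesis by (intro closed_Collect_le) (auto intro: continuous_on_const)
    qed
    moreover have "closed {x. h x = 0}"
      using assms(5) by (intro closed_Collect_eq) (auto intro: continuous_on_const)
    ultimately show ?thesis by (metis closed_INT closed_Int)
  qed
  define L where "L = K / a"
  have Lpos: "L > 0" unfolding L_def using a K by simp
  define \<delta> where "\<delta> = \<epsilon> / (2 * L)"
  have dpos: "\<delta> > 0" unfolding \<delta>_def using eps Lpos by simp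
  obtain \<theta> where th: "sup_dist \<Phi> u (f \<theta>) < ereal \<delta>" using assms(7) u dpos by blast
  have qn: "(qnorm Q x)\<^sup>2 = x \<bullet> (Q *v x)" for x
    unfolding qnorm_def using psd by simp
  have pt: "norm (u \<phi> - projQ Q C (f \<theta> \<phi>)) \<le> \<epsilon> / 2" if phi: "\<phi> \<in> \<Phi>" for \<phi>
  proof -
    have uC: "u \<phi> \<in> C" using u phi unfolding C_def by blast
    then have neC: "C \<noteq> {}" by blast
    obtain p0 where "p0 \<in> C \<and> (\<forall>w\<in>C. (p0 - f \<theta> \<phi>) \<bullet> (Q *v (p0 - f \<theta> \<phi>)) \<le> (w - f \<theta> \<phi>) \<bullet> (Q *v (w - f \<theta> \<phi>)))"
      using exmin[OF a clC neC, of "f \<theta> \<phi>"] by blast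
    then have "\<exists>w. w \<in> C \<and> (\<forall>w'\<in>C. (qnorm Q (w - f \<theta> \<phi>))\<^sup>2 \<le> (qnorm Q (w' - f \<theta> \<phi>))\<^sup>2)"
      unfolding qn by blast
    then have "projQ Q C (f \<theta> \<phi>) \<in> C \<and> (\<forall>w'\<in>C. (qnorm Q (projQ Q C (f \<theta> \<phi>) - f \<theta> \<phi>))\<^sup>2 \<le> (qnorm Q (w' - f \<theta> \<phi>))\<^sup>2)"
      unfolding projQ_def by (rule someI_ex)
    then have p: "projQ Q C (f \<theta> \<phi>) \<in> C"
      "\<forall>w\<in>C. (projQ Q C (f \<theta> \<phi>) - f \<theta> \<phi>) \<bullet> (Q *v (projQ Q C (f \<theta> \<phi>) - f \<theta> \<phi>)) \<le> (w - f \<theta> \<phi>) \<bullet> (Q *v (w - f \<theta> \<phi>))"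
      unfolding qn by auto
    have m1: "\<forall>w\<in>C. (u \<phi> - u \<phi>) \<bullet> (Q *v (u \<phi> - u \<phi>)) \<le> (w - u \<phi>) \<bullet> (Q *v (w - u \<phi>))"
      using psd by simp
    have "norm (u \<phi> - projQ Q C (f \<theta> \<phi>)) \<le> L * norm (u \<phi> - f \<theta> \<phi>)"
      unfolding L_def by (rule lipproj[OF sym psd a K cvx uC p(1) m1 p(2)])
    moreover have "ereal (norm (u \<phi> - f \<theta> \<phi>)) \<le> sup_dist \<Phi> u (f \<theta>)"
      unfolding sup_dist_def using phi by (rule SUP_upper)
    then have "ereal (norm (u \<phi> - f \<theta> \<phi>)) < ereal \<delta>" using th by (rule le_less_trans)
    then have "norm (u \<phi> - f \<theta> \<phi>) < \<delta>" by simp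
    ultimately have "norm (u \<phi> - projQ Q C (f \<theta> \<phi>)) \<le> L * \<delta>"
      using Lpos by (smt (verit) mult_left_mono)
    also have "L * \<delta> = \<epsilon> / 2" unfolding \<delta>_def using Lpos by simp
    finally show ?thesis .
  qed
  have "sup_dist \<Phi> u (\<lambda>\<phi>. projQ Q C (f \<theta> \<phi>)) \<le> ereal (\<epsilon> / 2)"
    unfolding sup_dist_def by (rule SUP_least) (use pt in simp)
  also have "\<dots> < ereal \<epsilon>" using eps by simp
  finally show "\<exists>\<theta>. sup_dist \<Phi> u (\<lambda>\<phi>. projQ Q (feasible g h) (f \<theta> \<phi>)) < ereal \<epsilon>"
    unfolding C_def by blast
qed

end
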